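(* Fix a base $B>1$ and integers $1\le d\le m$. Let $\mathfrak{B}_0$ be a fixed $m$-dimensional box and let $\mathfrak{B}_0\supset\mathfrak{B}_1\supset\cdots$ be a linear-fragmentation process whose proportion cuts $P_1,\dots,P_m$ have probability density functions $f_i:(0,1)\to(0,\infty)$. Let $V_d^{(n)}:=\mathrm{Vol}_d(\mathfrak{B}_n)$, and let $\mathfrak{m}_d^{(n)}:=\max_{I}\prod_{i\in I}S_i^{(n)}$, the maximum over all subsets $I\subset\{1,\dots,m\}$ with $|I|=d$, where $S_1^{(n)},\dots,S_m^{(n)}$ are the side lengths of $\mathfrak{B}_n$. If the sequence $\mathfrak{m}_d^{(n)}$ converges to strong Benford behavior in base $B$, then the sequence $V_d^{(n)}$ converges to strong Benford behavior in base $B$ as $n\to\infty$.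
   Context: Significand: for $x>0$ and base $B>1$, $S_B(x)$ is the unique number in $[1,B)$ such that $\log_B x-\log_B S_B(x)$ is an integer. A sequence of positive random variables $X^{(n)}$ converges to strong Benford behavior in base $B$ if $\mathbb{P}(S_B(X^{(n)})\le D)\to\log_B D$ for every $D\in[1,B]$. An $m$-dimensional box is a set $[a_1,b_1]\times\cdots\times[a_m,b_m]\subset\mathbb{R}^m$ with finite $a_i<b_i$; its side lengths are $b_i-a_i$. For a box $\mathfrak{B}=\prod_i[a_i,b_i]$ and $1\le d\le m$, its $d$-volume is $\mathrm{Vol}_d(\mathfrak{B}):=2^{m-d}\sum_{|I|=d}\prod_{i\in I}(b_i-a_i)$, summing over all $I\subset\{1,\dots,m\}$ with $|I|=d$. A linear-fragmentation process is a sequence of random $m$-dimensional boxes $\mathfrak{B}_0\supset\mathfrak{B}_1\supset\cdots$ such that, conditionally on $\mathfrak{B}_n$, the box $\mathfrak{B}_{n+1}$ is obtained by multiplying the $i$-th side length of $\mathfrak{B}_n$ by a proportion cut, where at each step $n\ge1$ fresh independent proportion cuts $P_1^{(n)},\dots,P_m^{(n)}\in(0,1)$ are drawn, independent across $i$ and $n$, with $P_i^{(n)}$ distributed as a fixed continuous random variable $P_i$ (the same for all $n$). Thus the side lengths of $\mathfrak{B}_n$ are $S_i^{(n)}=P_i^{(0)}\prod_{t=1}^nP_i^{(t)}$, where $P_i^{(0)}$ denotes the $i$-th side length of $\mathfrak{B}_0$. It is assumed that $\log_B P_i$ has finite mean, variance and third absolute moment, and that $\mathbb{E}[\log_B P_i]=\mu_P\in\mathbb{R}$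 and $\mathrm{Var}[\log_B P_i]=\sigma_P^2>0$ are the same for all $1\le i\le m$. *)

theory Defs
  imports "HOL-Probability.Probability"
begin

definition significand :: "real \<Rightarrow> real \<Rightarrow> real" where
  "significand B x = x / B powr (real_of_int \<lfloor>log B x\<rfloor>)"

definition strong_benford :: "'a measure \<Rightarrow> real \<Rightarrow> (nat \<Rightarrow> 'a \<Rightarrow> real) \<Rightarrow> bool" where
  "strong_benford M B X \<longleftrightarrow>
     (\<forall>D\<in>{1..B}. (\<lambda>n. measure M {\<omega>\<in>space M. significand B (X n \<omega>) \<le> D}) \<longlonglongrightarrow> log B D)"

definition vol_d :: "nat \<Rightarrow> nat \<Rightarrow> (nat \<Rightarrow> real) \<Rightarrow> real" where
  "vol_d m d s = 2 ^ (m - d) * (\<Sum>I\<in>{I. I \<subseteq> {1..m} \<and> card I = d}. \<Prod>i\<in>I. s i)"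

definition max_d :: "nat \<Rightarrow> nat \<Rightarrow> (nat \<Rightarrow> real) \<Rightarrow> real" where
  "max_d m d s = Max ((\<lambda>I. \<Prod>i\<in>I. s i) ` {I. I \<subseteq> {1..m} \<and> card I = d})"

definition side :: "(nat \<Rightarrow> real) \<Rightarrow> (nat \<Rightarrow> real) \<Rightarrow> (nat \<Rightarrow> nat \<Rightarrow> 'a \<Rightarrow> real)
    \<Rightarrow> nat \<Rightarrow> 'a \<Rightarrow> nat \<Rightarrow> real" where
  "side a b P n \<omega> i = (b i - a i) * (\<Prod>t\<in>{1..n}. P i t \<omega>)"

end

theory Submission
  imports Defs
begin


lemma std_normal_cdf_cont: "isCont (cdf std_normal_distribution) x"
proof -
  have "emeasure std_normal_distribution {x} = 0"
    by (subst emeasure_density) (auto intro!: nn_integral_null_set)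
  then show ?thesis using real_dist_normal_dist
    by (simp add: finite_borel_measure.isCont_cdf real_distribution.finite_borel_measure_M measure_def)
qed

lemma (in prob_space) anticonc:
  fixes X :: "nat \<Rightarrow> 'a \<Rightarrow> real"
  assumes indep: "indep_vars (\<lambda>i. borel) X UNIV"
    and distr: "\<And>n. distr M borel (X n) = distr M borel (X 0)"
    and sq: "integrable M (\<lambda>x. (X 0 x)\<^sup>2)"
    and mean: "expectation (X 0) = 0"
    and varpos: "variance (X 0) > 0"
  shows "(\<lambda>n. prob {\<omega>\<in>space M. \<bar>c + (\<Sum>t<n. X t \<omega>)\<bar> \<le> K}) \<longlonglongrightarrow> 0"
proof -
  define s where "s = sqrt (variance (X 0))"
  have spos: "s > 0" using varpos by (simp add: s_def)
  have rv[measurable]: "X n \<in> borel_measurable M" for n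
    using indep unfolding indep_vars_def2 by simp
  have D: "distr M borel (X n) = distr M borel (X 0)" for n by (rule distr)
  have sqn: "integrable M (\<lambda>x. (X n x)\<^sup>2)" for n
  proof -
    have "integrable (distr M borel (X 0)) (\<lambda>x. x\<^sup>2)"
      using sq by (subst integrable_distr_eq) auto
    then have "integrable (distr M borel (X n)) (\<lambda>x. x\<^sup>2)" by (simp only: D[of n])
    then show ?thesis by (subst (asm) integrable_distr_eq) auto
  qed
  have intn: "integrable M (X n)" for n
    by (rule square_integrable_imp_integrable[OF _ sqn]) simp
  have int0: "integrable (distr M borel (X 0)) (\<lambda>x. x)"
    using intn[of 0] by (subst integrable_distr_eq) auto
  have meann: "expectation (X n) = 0" for n
  proof -
    have "expectation (X n) = integral\<^sup>L (distr M borel (X n)) (\<lambda>x. x)"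
      by (subst integral_distr) auto
    also have "\<dots> = integral\<^sup>L (distr M borel (X 0)) (\<lambda>x. x)" by (simp only: D[of n])
    also have "\<dots> = expectation (X 0)" by (subst integral_distr) auto
    finally show ?thesis using mean by simp
  qed
  have varn: "variance (X n) = s\<^sup>2" for n
  proof -
    have "variance (X n) = integral\<^sup>L (distr M borel (X n)) (\<lambda>x. x\<^sup>2)"
      using meann[of n] by (subst integral_distr) auto
    also have "\<dots> = integral\<^sup>L (distr M borel (X 0)) (\<lambda>x. x\<^sup>2)" by (simp only: D[of n])
    also have "\<dots> = variance (X 0)" using mean by (subst integral_distr) auto
    finally show ?thesis using varpos by (simp add: s_def)
  qed
  have clt: "weak_conv_m (\<lambda>n. distr M borel (\<lambda>x. (\<Sum>i<n. X i x) / sqrt (n * s\<^sup>2))) std_normal_distribution"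
    by (rule central_limit_theorem_zero_mean[OF indep meann spos sqn varn D])
  define F where "F n y = prob {\<omega>\<in>space M. (\<Sum>i<n. X i \<omega>) / sqrt (n * s\<^sup>2) \<le> y}" for n y
  define \<Phi> where "\<Phi> = cdf std_normal_distribution"
  have Fconv: "(\<lambda>n. F n y) \<longlonglongrightarrow> \<Phi> y" for y
  proof -
    have "(\<lambda>n. cdf (distr M borel (\<lambda>x. (\<Sum>i<n. X i x) / sqrt (n * s\<^sup>2))) y) \<longlonglongrightarrow> \<Phi> y"
      using clt std_normal_cdf_cont unfolding weak_conv_m_def weak_conv_def \<Phi>_def by blast
    moreover have "cdf (distr M borel (\<lambda>x. (\<Sum>i<n. X i x) / sqrt (n * s\<^sup>2))) y = F n y" for n
      unfolding cdf_def F_def by (subst measure_distr) (auto simp: vimage_def Int_def conj_commute)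
    ultimately show ?thesis by simp
  qed
  show ?thesis
  proof (rule order_tendstoI)
    fix a :: real assume "a < 0"
    then show "\<forall>\<^sub>F n in sequentially. a < prob {\<omega>\<in>space M. \<bar>c + (\<Sum>t<n. X t \<omega>)\<bar> \<le> K}"
      by (intro always_eventually allI less_le_trans[OF _ measure_nonneg])
  next
    fix a :: real assume "0 < a"
    obtain \<delta> where \<delta>0: "\<delta> > 0" and \<delta>1: "\<And>x. x \<noteq> 0 \<and> norm (x - 0) < \<delta> \<longrightarrow> norm (\<Phi> x - \<Phi> 0) < a / 4"
      using LIM_D[OF std_normal_cdf_cont[of 0, unfolded isCont_def], of "a/4"] \<open>0 < a\<close>
      unfolding \<Phi>_def by auto
    have \<delta>: "\<delta> > 0" "\<And>x. \<bar>x\<bar> < \<delta> \<Longrightarrow> \<bar>\<Phi> x - \<Phi> 0\<bar> < a / 4"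
      using \<delta>0 apply simp
      subgoal for x using \<delta>1[of x] \<open>0 < a\<close> by (cases "x = 0") auto
      done
    define e where "e = \<delta> / 2"
    have h1: "\<bar>\<Phi> e - \<Phi> 0\<bar> < a / 4" "\<bar>\<Phi> (-e) - \<Phi> 0\<bar> < a / 4"
      using \<delta> unfolding e_def by auto
    have e: "e > 0" "\<Phi> e - \<Phi> (- e) < a / 2"
      using h1 \<delta>(1) unfolding abs_less_iff by (auto simp: e_def)
    have lim2: "(\<lambda>n. F n e - F n (- e)) \<longlonglongrightarrow> \<Phi> e - \<Phi> (- e)"
      by (intro tendsto_diff Fconv)
    have ev1: "\<forall>\<^sub>F n in sequentially. F n e - F n (- e) < a"
    proof -
      have "\<Phi> e - \<Phi> (- e) < a" using e \<open>0 < a\<close> by linarith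
      from order_tendstoD(2)[OF lim2 this] show ?thesis .
    qed
    have "filterlim (\<lambda>n. s\<^sup>2 * real n) at_top sequentially"
      by (rule filterlim_tendsto_pos_mult_at_top[OF tendsto_const _ filterlim_real_sequentially]) (use spos in simp)
    then have "filterlim (\<lambda>n. real n * s\<^sup>2) at_top sequentially" by (simp add: mult.commute)
    then have "filterlim (\<lambda>n. sqrt (real n * s\<^sup>2)) at_top sequentially"
      using filterlim_compose sqrt_at_top by blast
    then have "(\<lambda>n. (\<bar>c\<bar> + \<bar>K\<bar>) / sqrt (real n * s\<^sup>2)) \<longlonglongrightarrow> 0"
      by (intro tendsto_divide_0[OF tendsto_const] filterlim_at_top_imp_at_infinity)
    then have ev2: "\<forall>\<^sub>F n in sequentially. (\<bar>c\<bar> + \<bar>K\<bar>) / sqrt (real n * s\<^sup>2) < e"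
      using order_tendstoD(2) e by blast
    have ev3: "\<forall>\<^sub>F n in sequentially. n > 0" by (simp add: eventually_gt_at_top)
    show "\<forall>\<^sub>F n in sequentially. prob {\<omega>\<in>space M. \<bar>c + (\<Sum>t<n. X t \<omega>)\<bar> \<le> K} < a"
      using ev1 ev2 ev3
    proof eventually_elim
      case (elim n)
      let ?q = "sqrt (real n * s\<^sup>2)"
      have q: "?q > 0" using elim spos by simp
      have sub: "{\<omega>\<in>space M. \<bar>c + (\<Sum>t<n. X t \<omega>)\<bar> \<le> K} \<subseteq>
          {\<omega>\<in>space M. (\<Sum>i<n. X i \<omega>) / ?q \<le> e} - {\<omega>\<in>space M. (\<Sum>i<n. X i \<omega>) / ?q \<le> - e}"
      proof safe
        fix \<omega> assume "\<bar>c + (\<Sum>t<n. X t \<omega>)\<bar> \<le> K"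
        then have "\<bar>\<Sum>t<n. X t \<omega>\<bar> \<le> \<bar>c\<bar> + \<bar>K\<bar>" by linarith
        then have "\<bar>(\<Sum>t<n. X t \<omega>) / ?q\<bar> \<le> (\<bar>c\<bar> + \<bar>K\<bar>) / ?q"
          using q by (simp add: abs_div divide_right_mono)
        then have "\<bar>(\<Sum>t<n. X t \<omega>) / ?q\<bar> < e" using elim by linarith
        then have h: "- e < (\<Sum>t<n. X t \<omega>) / ?q" "(\<Sum>t<n. X t \<omega>) / ?q < e"
          unfolding abs_less_iff by auto
        then show "(\<Sum>i<n. X i \<omega>) / ?q \<le> e" "(\<Sum>i<n. X i \<omega>) / ?q \<le> - e \<Longrightarrow> False" by linarith+
      qed
      have "prob {\<omega>\<in>space M. \<bar>c + (\<Sum>t<n. X t \<omega>)\<bar> \<le> K} \<le>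
          prob ({\<omega>\<in>space M. (\<Sum>i<n. X i \<omega>) / ?q \<le> e} - {\<omega>\<in>space M. (\<Sum>i<n. X i \<omega>) / ?q \<le> - e})"
        by (rule finite_measure_mono[OF sub]) measurable
      also have "\<dots> = F n e - F n (- e)"
        unfolding F_def using e by (subst finite_measure_Diff) (auto intro!: arg_cong[where f=prob])
      finally show ?case using elim by linarith
    qed
  qed
qed



lemma borel_measurable_frac[measurable]:
  fixes f :: "'a \<Rightarrow> real"
  assumes [measurable]: "f \<in> borel_measurable M"
  shows "(\<lambda>x. frac (f x)) \<in> borel_measurable M"
  unfolding frac_def by measurable

definition fb :: "'a measure \<Rightarrow> (nat \<Rightarrow> 'a \<Rightarrow> real) \<Rightarrow> bool" where
  "fb M Y \<longleftrightarrow> (\<forall>t\<in>{0..1}. (\<lambda>n. measure M {\<omega>\<in>space M. frac (Y n \<omega>) \<le> t}) \<longlonglongrightarrow> t)"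

definition clamp :: "real \<Rightarrow> real" where "clamp x = max 0 (min x 1)"

lemma clamp_ge: "y \<le> 1 \<Longrightarrow> y \<le> clamp y" by (simp add: clamp_def)
lemma clamp_le: "0 \<le> y \<Longrightarrow> clamp y \<le> y" by (simp add: clamp_def)
lemma clamp_id: "0 \<le> y \<Longrightarrow> y \<le> 1 \<Longrightarrow> clamp y = y" by (simp add: clamp_def)

lemma (in prob_space) fb_F:
  assumes "fb M Y"
  shows "(\<lambda>n. prob {\<omega>\<in>space M. frac (Y n \<omega>) \<le> x}) \<longlonglongrightarrow> clamp x"
proof (cases "x < 0")
  case True
  then have "{\<omega>\<in>space M. frac (Y n \<omega>) \<le> x} = {}" for n
  proof -
    have "\<not> frac y \<le> x" for y using frac_ge_0[of y] True by linarith
    then show ?thesis by simp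
  qed
  then have "prob {\<omega>\<in>space M. frac (Y n \<omega>) \<le> x} = 0" for n by (simp only: measure_empty)
  then show ?thesis using True by (simp add: clamp_def)
next
  case False
  show ?thesis
  proof (cases "x \<ge> 1")
    case True
    then have "{\<omega>\<in>space M. frac (Y n \<omega>) \<le> x} = space M" for n
    proof -
      have "frac y \<le> x" for y using frac_lt_1[of y] True by linarith
      then show ?thesis by simp
    qed
    then show ?thesis using True by (simp add: clamp_def prob_space)
  next
    case False
    then show ?thesis using \<open>\<not> x < 0\<close> assms by (auto simp: fb_def clamp_def)
  qed
qed

lemma (in prob_space) fb_G:
  assumes "fb M Y" and [measurable]: "\<And>n. Y n \<in> borel_measurable M"
  shows "(\<lambda>n. prob {\<omega>\<in>space M. frac (Y n \<omega>) < x}) \<longlonglongrightarrow> clamp x"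
proof (rule order_tendstoI)
  fix a assume "a < clamp x"
  show "\<forall>\<^sub>F n in sequentially. a < prob {\<omega>\<in>space M. frac (Y n \<omega>) < x}"
  proof (cases "a < 0")
    case True then show ?thesis
      by (intro always_eventually allI less_le_trans[OF _ measure_nonneg])
  next
    case False
  define y where "y = (a + clamp x) / 2"
  have "clamp x > 0" using \<open>a < clamp x\<close> False by linarith
  then have xpos: "x > 0" unfolding clamp_def by (auto simp: max_def min_def split: if_splits)
  have "a < clamp y" using \<open>a < clamp x\<close> unfolding y_def clamp_def by (auto simp: max_def min_def)
  from order_tendstoD(1)[OF fb_F[OF assms(1), of y] this]
  show "\<forall>\<^sub>F n in sequentially. a < prob {\<omega>\<in>space M. frac (Y n \<omega>) < x}"
  proof eventually_elim
    case (elim n)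
    have "y < x" using \<open>a < clamp x\<close> xpos unfolding y_def clamp_def by (auto simp: max_def min_def)
    then have "prob {\<omega>\<in>space M. frac (Y n \<omega>) \<le> y} \<le> prob {\<omega>\<in>space M. frac (Y n \<omega>) < x}"
      by (intro finite_measure_mono) auto
    with elim show ?case by linarith
  qed
  qed
next
  fix a assume "clamp x < a"
  from order_tendstoD(2)[OF fb_F[OF assms(1), of x] this]
  show "\<forall>\<^sub>F n in sequentially. prob {\<omega>\<in>space M. frac (Y n \<omega>) < x} < a"
  proof eventually_elim
    case (elim n)
    have "prob {\<omega>\<in>space M. frac (Y n \<omega>) < x} \<le> prob {\<omega>\<in>space M. frac (Y n \<omega>) \<le> x}"
      by (intro finite_measure_mono) auto
    with elim show ?case by linarith
  qed
qed

lemma (in prob_space) fb_shift: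
  assumes "fb M Y" and [measurable]: "\<And>n. Y n \<in> borel_measurable M"
  shows "fb M (\<lambda>n \<omega>. Y n \<omega> + c)"
  unfolding fb_def
proof
  fix t :: real assume t: "t \<in> {0..1}"
  show "(\<lambda>n. prob {\<omega>\<in>space M. frac (Y n \<omega> + c) \<le> t}) \<longlonglongrightarrow> t"
  proof (cases "t = 1")
    case True
    then have "{\<omega>\<in>space M. frac (Y n \<omega> + c) \<le> t} = space M" for n
    proof -
      have "frac y \<le> t" for y using frac_lt_1[of y] True by linarith
      then show ?thesis by simp
    qed
    then show ?thesis using True by (simp add: prob_space)
  next
    case False
    with t have t1: "t < 1" "0 \<le> t" by auto
    define c' where "c' = frac c"
    have c': "0 \<le> c'" "c' < 1" unfolding c'_def by (auto simp: frac_lt_1)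
    have eq: "{\<omega>\<in>space M. frac (Y n \<omega> + c) \<le> t} =
       {\<omega>\<in>space M. frac (Y n \<omega>) \<le> t - c'} \<union>
       ({\<omega>\<in>space M. frac (Y n \<omega>) \<le> t + 1 - c'} - {\<omega>\<in>space M. frac (Y n \<omega>) < 1 - c'})" for n
      using t1 c' by (auto simp: frac_add c'_def)
    have "prob {\<omega>\<in>space M. frac (Y n \<omega> + c) \<le> t} =
       prob {\<omega>\<in>space M. frac (Y n \<omega>) \<le> t - c'} +
       (prob {\<omega>\<in>space M. frac (Y n \<omega>) \<le> t + 1 - c'} - prob {\<omega>\<in>space M. frac (Y n \<omega>) < 1 - c'})" for n
    proof -
      have sub: "{\<omega>\<in>space M. frac (Y n \<omega>) < 1 - c'} \<subseteq> {\<omega>\<in>space M. frac (Y n \<omega>) \<le> t + 1 - c'}"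
        using t1 by auto
      show ?thesis
      unfolding eq using t1 c'
      by (subst finite_measure_Union) (auto simp: finite_measure_Diff[OF _ _ sub] intro!: arg_cong[where f=prob])
    qed
    moreover have "(\<lambda>n. prob {\<omega>\<in>space M. frac (Y n \<omega>) \<le> t - c'} +
       (prob {\<omega>\<in>space M. frac (Y n \<omega>) \<le> t + 1 - c'} - prob {\<omega>\<in>space M. frac (Y n \<omega>) < 1 - c'}))
       \<longlonglongrightarrow> clamp (t - c') + (clamp (t + 1 - c') - clamp (1 - c'))"
      by (intro tendsto_add tendsto_diff fb_F fb_G assms)
    moreover have "clamp (t - c') + (clamp (t + 1 - c') - clamp (1 - c')) = t"
      using t1 c' unfolding clamp_def by (auto simp: max_def min_def)
    ultimately show ?thesis by simp
  qed
qed

lemma frac_add_small: "0 \<le> e \<Longrightarrow> frac y + e < 1 \<Longrightarrow> frac (y + e) = frac y + (e::real)"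
proof -
  assume a: "0 \<le> e" "frac y + e < 1"
  then have "e < 1" using frac_ge_0[of y] by linarith
  then have fe: "frac e = e" using a(1) by (simp add: frac_eq)
  show ?thesis using a(2) by (simp add: frac_add fe)
qed

lemma (in prob_space) fb_perturb:
  assumes "fb M Y" and [measurable]: "\<And>n. Y n \<in> borel_measurable M" "\<And>n. E n \<in> borel_measurable M"
    and Epos: "\<And>n \<omega>. \<omega> \<in> space M \<Longrightarrow> E n \<omega> \<ge> 0"
    and Esmall: "\<And>\<eta>. \<eta> > 0 \<Longrightarrow> (\<lambda>n. prob {\<omega>\<in>space M. E n \<omega> > \<eta>}) \<longlonglongrightarrow> 0"
  shows "fb M (\<lambda>n \<omega>. Y n \<omega> + E n \<omega>)"
  unfolding fb_def
proof
  fix t :: real assume t: "t \<in> {0..1}"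
  show "(\<lambda>n. prob {\<omega>\<in>space M. frac (Y n \<omega> + E n \<omega>) \<le> t}) \<longlonglongrightarrow> t"
  proof (rule order_tendstoI)
    fix a assume "a < t"
    define \<eta> where "\<eta> = (t - a) / 2"
    have \<eta>: "\<eta> > 0" using \<open>a < t\<close> by (simp add: \<eta>_def)
    have "(\<lambda>n. prob {\<omega>\<in>space M. frac (Y n \<omega>) \<le> t - \<eta>} - prob {\<omega>\<in>space M. E n \<omega> > \<eta>})
        \<longlonglongrightarrow> clamp (t - \<eta>) - 0"
      by (intro tendsto_diff fb_F Esmall assms \<eta>)
    moreover have "a < clamp (t - \<eta>) - 0"
    proof -
      have "a < t - \<eta>" "t - \<eta> \<le> 1" using \<open>a < t\<close> t \<eta> unfolding \<eta>_def by (auto simp: field_simps)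
      then show ?thesis using clamp_ge[of "t - \<eta>"] by linarith
    qed
    ultimately have "\<forall>\<^sub>F n in sequentially. a < prob {\<omega>\<in>space M. frac (Y n \<omega>) \<le> t - \<eta>} - prob {\<omega>\<in>space M. E n \<omega> > \<eta>}"
      by (rule order_tendstoD(1))
    then show "\<forall>\<^sub>F n in sequentially. a < prob {\<omega>\<in>space M. frac (Y n \<omega> + E n \<omega>) \<le> t}"
    proof eventually_elim
      case (elim n)
      have sub: "{\<omega>\<in>space M. frac (Y n \<omega>) \<le> t - \<eta>} \<subseteq> {\<omega>\<in>space M. frac (Y n \<omega> + E n \<omega>) \<le> t} \<union> {\<omega>\<in>space M. E n \<omega> > \<eta>}"
      proof safe
        fix \<omega> assume \<omega>: "\<omega> \<in> space M" "frac (Y n \<omega>) \<le> t - \<eta>" "\<not> \<eta> < E n \<omega>"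
        show "frac (Y n \<omega> + E n \<omega>) \<le> t"
        proof (cases "frac (Y n \<omega>) + E n \<omega> < 1")
          case True
          then show ?thesis using frac_add_small[OF Epos[OF \<omega>(1)] True] \<omega> by simp
        next
          case False
          then show ?thesis using \<omega> t frac_lt_1[of "Y n \<omega> + E n \<omega>"] by auto
        qed
      qed
      have "prob {\<omega>\<in>space M. frac (Y n \<omega>) \<le> t - \<eta>} \<le> prob ({\<omega>\<in>space M. frac (Y n \<omega> + E n \<omega>) \<le> t} \<union> {\<omega>\<in>space M. E n \<omega> > \<eta>})"
        by (rule finite_measure_mono[OF sub]) measurable
      also have "\<dots> \<le> prob {\<omega>\<in>space M. frac (Y n \<omega> + E n \<omega>) \<le> t} + prob {\<omega>\<in>space M. E n \<omega> > \<eta>}"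
        by (rule measure_Un_le) measurable
      finally show ?case using elim by linarith
    qed
  next
    fix a assume "t < a"
    define \<eta> where "\<eta> = min ((a - t) / 2) (1/2)"
    have \<eta>: "\<eta> > 0" "\<eta> < 1" using \<open>t < a\<close> by (auto simp: \<eta>_def)
    have "(\<lambda>n. prob {\<omega>\<in>space M. frac (Y n \<omega>) \<le> t} + (1 - prob {\<omega>\<in>space M. frac (Y n \<omega>) < 1 - \<eta>})
          + prob {\<omega>\<in>space M. E n \<omega> > \<eta>}) \<longlonglongrightarrow> clamp t + (1 - clamp (1 - \<eta>)) + 0"
      by (intro tendsto_add tendsto_diff tendsto_const fb_F fb_G Esmall assms \<eta>)
    moreover have "clamp t + (1 - clamp (1 - \<eta>)) + 0 < a"
    proof -
      have "clamp t = t" "clamp (1 - \<eta>) = 1 - \<eta>" using t \<eta> by (auto intro!: clamp_id)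
      moreover have "\<eta> < a - t" using \<open>t < a\<close> unfolding \<eta>_def by (auto simp: min_def field_simps)
      ultimately show ?thesis by linarith
    qed
    ultimately have "\<forall>\<^sub>F n in sequentially. prob {\<omega>\<in>space M. frac (Y n \<omega>) \<le> t} + (1 - prob {\<omega>\<in>space M. frac (Y n \<omega>) < 1 - \<eta>})
          + prob {\<omega>\<in>space M. E n \<omega> > \<eta>} < a"
      by (rule order_tendstoD(2))
    then show "\<forall>\<^sub>F n in sequentially. prob {\<omega>\<in>space M. frac (Y n \<omega> + E n \<omega>) \<le> t} < a"
    proof eventually_elim
      case (elim n)
      have sub: "{\<omega>\<in>space M. frac (Y n \<omega> + E n \<omega>) \<le> t} \<subseteq> ({\<omega>\<in>space M. frac (Y n \<omega>) \<le> t} \<union>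
          (space M - {\<omega>\<in>space M. frac (Y n \<omega>) < 1 - \<eta>})) \<union> {\<omega>\<in>space M. E n \<omega> > \<eta>}"
      proof safe
        fix \<omega> assume \<omega>: "\<omega> \<in> space M" "frac (Y n \<omega> + E n \<omega>) \<le> t" "\<not> \<eta> < E n \<omega>" "frac (Y n \<omega>) < 1 - \<eta>"
        then have "frac (Y n \<omega>) + E n \<omega> < 1" by linarith
        from frac_add_small[OF Epos[OF \<omega>(1)] this] \<omega> Epos[of \<omega> n, OF \<omega>(1)]
        show "frac (Y n \<omega>) \<le> t" by linarith
      qed
      have "prob {\<omega>\<in>space M. frac (Y n \<omega> + E n \<omega>) \<le> t} \<le> prob (({\<omega>\<in>space M. frac (Y n \<omega>) \<le> t} \<union>
          (space M - {\<omega>\<in>space M. frac (Y n \<omega>) < 1 - \<eta>})) \<union> {\<omega>\<in>space M. E n \<omega> > \<eta>})"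
        by (rule finite_measure_mono[OF sub]) measurable
      also have "\<dots> \<le> prob ({\<omega>\<in>space M. frac (Y n \<omega>) \<le> t} \<union>
          (space M - {\<omega>\<in>space M. frac (Y n \<omega>) < 1 - \<eta>})) + prob {\<omega>\<in>space M. E n \<omega> > \<eta>}"
        by (rule measure_Un_le) measurable
      also have "prob ({\<omega>\<in>space M. frac (Y n \<omega>) \<le> t} \<union> (space M - {\<omega>\<in>space M. frac (Y n \<omega>) < 1 - \<eta>}))
          \<le> prob {\<omega>\<in>space M. frac (Y n \<omega>) \<le> t} + prob (space M - {\<omega>\<in>space M. frac (Y n \<omega>) < 1 - \<eta>})"
        by (rule measure_Un_le) measurable
      also have "prob (space M - {\<omega>\<in>space M. frac (Y n \<omega>) < 1 - \<eta>}) = 1 - prob {\<omega>\<in>space M. frac (Y n \<omega>) < 1 - \<eta>}"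
        by (rule prob_compl) measurable
      finally show ?case using elim by linarith
    qed
  qed
qed


lemma significand_le_iff:
  assumes "B > 1" "x > 0" "D > 0"
  shows "significand B x \<le> D \<longleftrightarrow> frac (log B x) \<le> log B D"
proof -
  have "significand B x = B powr (log B x) / B powr (real_of_int \<lfloor>log B x\<rfloor>)"
    using assms by (simp add: significand_def)
  also have "\<dots> = B powr frac (log B x)"
    by (simp add: frac_def powr_diff)
  finally show ?thesis using assms by (simp add: le_log_iff)
qed

lemma (in prob_space) sb_iff_fb:
  assumes B: "B > 1" and pos: "\<And>n \<omega>. \<omega> \<in> space M \<Longrightarrow> X n \<omega> > 0"
  shows "strong_benford M B X \<longleftrightarrow> fb M (\<lambda>n \<omega>. log B (X n \<omega>))"
proof
  assume sb: "strong_benford M B X"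
  show "fb M (\<lambda>n \<omega>. log B (X n \<omega>))" unfolding fb_def
  proof
    fix t :: real assume t: "t \<in> {0..1}"
    define D where "D = B powr t"
    have D: "D \<in> {1..B}" using t B unfolding D_def
      by (auto intro: ge_one_powr_ge_zero powr_le_one_le) (metis powr_mono powr_one_gt_zero_iff less_imp_le order_less_trans zero_less_one)
    have lD: "log B D = t" using B by (simp add: D_def)
    have eq: "{\<omega>\<in>space M. significand B (X n \<omega>) \<le> D} = {\<omega>\<in>space M. frac (log B (X n \<omega>)) \<le> t}" for n
      using significand_le_iff[OF B pos, of _ D] D lD by auto
    have "(\<lambda>n. prob {\<omega>\<in>space M. significand B (X n \<omega>) \<le> D}) \<longlonglongrightarrow> log B D"
      using sb D unfolding strong_benford_def by blast
    then show "(\<lambda>n. prob {\<omega>\<in>space M. frac (log B (X n \<omega>)) \<le> t}) \<longlonglongrightarrow> t"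
      unfolding eq lD .
  qed
next
  assume fbX: "fb M (\<lambda>n \<omega>. log B (X n \<omega>))"
  show "strong_benford M B X" unfolding strong_benford_def
  proof
    fix D assume D: "D \<in> {1..B}"
    have t: "log B D \<in> {0..1}" using D B by auto
    have "{\<omega>\<in>space M. significand B (X n \<omega>) \<le> D} = {\<omega>\<in>space M. frac (log B (X n \<omega>)) \<le> log B D}" for n
      using significand_le_iff[OF B pos, of _ D] D by auto
    then show "(\<lambda>n. prob {\<omega>\<in>space M. significand B (X n \<omega>) \<le> D}) \<longlonglongrightarrow> log B D"
      using fbX t unfolding fb_def by auto
  qed
qed


lemma (in prob_space) fb_cong:
  assumes "fb M Y" "\<And>n \<omega>. \<omega> \<in> space M \<Longrightarrow> Z n \<omega> = Y n \<omega>"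
  shows "fb M Z"
proof -
  have "{\<omega>\<in>space M. frac (Z n \<omega>) \<le> t} = {\<omega>\<in>space M. frac (Y n \<omega>) \<le> t}" for n t
    using assms(2) by auto
  then show ?thesis using assms(1) unfolding fb_def by simp
qed

lemma log_prod_pos:
  assumes "finite A" "\<And>i. i \<in> A \<Longrightarrow> f i > 0"
  shows "log b (\<Prod>i\<in>A. f i) = (\<Sum>i\<in>A. log b (f i))"
  using assms
proof (induction A rule: finite_induct)
  case (insert x F)
  have "f x > 0" "prod f F > 0" using insert.prems by (auto intro: prod_pos)
  then show ?case using insert by (simp add: log_mult_pos)
qed simp

lemma sum_diff_sym:
  fixes g :: "nat \<Rightarrow> real"
  assumes "finite I" "finite J"
  shows "(\<Sum>i\<in>I. g i) - (\<Sum>j\<in>J. g j) = (\<Sum>i\<in>(I - J) \<union> (J - I). (if i \<in> I then 1 else -1) * g i)"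
proof -
  have "(\<Sum>i\<in>I. g i) = (\<Sum>i\<in>I \<inter> J. g i) + (\<Sum>i\<in>I - J. g i)"
  proof -
    have "(\<Sum>i\<in>I. g i) = (\<Sum>i\<in>I - I \<inter> J. g i) + (\<Sum>i\<in>I \<inter> J. g i)"
      using assms by (intro sum.subset_diff) auto
    moreover have "I - I \<inter> J = I - J" by auto
    ultimately show ?thesis by simp
  qed
  moreover have "(\<Sum>i\<in>J. g i) = (\<Sum>i\<in>I \<inter> J. g i) + (\<Sum>i\<in>J - I. g i)"
  proof -
    have "(\<Sum>i\<in>J. g i) = (\<Sum>i\<in>J - I \<inter> J. g i) + (\<Sum>i\<in>I \<inter> J. g i)"
      using assms by (intro sum.subset_diff) auto
    moreover have "J - I \<inter> J = J - I" by auto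
    ultimately show ?thesis by simp
  qed
  moreover have "(\<Sum>i\<in>(I - J) \<union> (J - I). (if i \<in> I then 1 else -1) * g i) =
      (\<Sum>i\<in>I - J. (if i \<in> I then 1 else -1) * g i) + (\<Sum>i\<in>J - I. (if i \<in> I then 1 else -1) * g i)"
    using assms by (intro sum.union_disjoint) auto
  moreover have "(\<Sum>i\<in>I - J. (if i \<in> I then 1 else -1) * g i) = (\<Sum>i\<in>I - J. g i)"
    by (intro sum.cong) auto
  moreover have "(\<Sum>i\<in>J - I. (if i \<in> I then 1 else -1) * g i) = - (\<Sum>i\<in>J - I. g i)"
    by (simp add: sum_negf[symmetric])
  ultimately show ?thesis by simp
qed

lemma sum_le_max_aux:
  fixes x :: "'b \<Rightarrow> real"
  assumes fin: "finite S" and ne: "S \<noteq> {}" and pos: "\<And>I. I \<in> S \<Longrightarrow> x I > 0" and B: "B > 1"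
    and sep: "\<And>I J. I \<in> S \<Longrightarrow> J \<in> S \<Longrightarrow> I \<noteq> J \<Longrightarrow> \<bar>log B (x I) - log B (x J)\<bar> > K"
  shows "(\<Sum>I\<in>S. x I) \<le> Max (x ` S) * (1 + card S * B powr (- K))"
proof -
  have "Max (x ` S) \<in> x ` S" using fin ne by (intro Max_in) auto
  then obtain J where J: "J \<in> S" "x J = Max (x ` S)" by (elim imageE) simp
  have small: "x I \<le> x J * B powr (- K)" if I: "I \<in> S - {J}" for I
  proof -
    have "x I \<le> x J" using J I fin by (metis DiffD1 Max_ge finite_imageI imageI)
    then have "log B (x I) \<le> log B (x J)" using pos[of I] pos[of J] I J B by (subst log_le_cancel_iff) auto
    moreover have "\<bar>log B (x I) - log B (x J)\<bar> > K" using sep[of I J] I J(1) by blast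
    ultimately have "log B (x I) < log B (x J) + (- K)" by linarith
    then have "B powr log B (x I) < B powr (log B (x J) + (- K))" using B by simp
    moreover have "B powr log B (x I) = x I" using pos[of I] I B by simp
    moreover have "B powr (log B (x J) + (- K)) = x J * B powr (- K)"
      using pos[of J] J B by (simp add: powr_diff powr_minus_divide)
    ultimately show ?thesis by simp
  qed
  have "(\<Sum>I\<in>S. x I) = x J + (\<Sum>I\<in>S - {J}. x I)"
    using fin J by (simp add: sum.remove)
  also have "(\<Sum>I\<in>S - {J}. x I) \<le> (\<Sum>I\<in>S - {J}. x J * B powr (- K))"
    by (intro sum_mono small)
  also have "\<dots> = card (S - {J}) * (x J * B powr (- K))" by simp
  also have "\<dots> \<le> card S * (x J * B powr (- K))"
    using pos[OF J(1)] by (intro mult_right_mono) (auto simp: card_Diff1_le fin)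
  finally show ?thesis using J by (simp add: algebra_simps)
qed

lemma pair_conc:
  fixes M :: "'a measure" and B :: real and m :: nat
    and P :: "nat \<Rightarrow> nat \<Rightarrow> 'a \<Rightarrow> real"
    and f :: "nat \<Rightarrow> real \<Rightarrow> real"
    and \<mu> \<sigma> :: real
  assumes "prob_space M"
    and "B > 1"
    and range: "\<And>i n \<omega>. i \<in> {1..m} \<Longrightarrow> n \<ge> 1 \<Longrightarrow> \<omega> \<in> space M \<Longrightarrow> P i n \<omega> \<in> {0<..<1}"
    and distr: "\<And>i n. i \<in> {1..m} \<Longrightarrow> n \<ge> 1 \<Longrightarrow>
        distributed M lborel (P i n) (\<lambda>x. ennreal (indicator {0<..<1} x * f i x))"
    and indep: "prob_space.indep_vars M (\<lambda>_. borel) (\<lambda>(i, n). P i n) ({1..m} \<times> {1..})"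
    and int1: "\<And>i. i \<in> {1..m} \<Longrightarrow> integrable M (\<lambda>\<omega>. log B (P i 1 \<omega>))"
    and int2: "\<And>i. i \<in> {1..m} \<Longrightarrow> integrable M (\<lambda>\<omega>. (log B (P i 1 \<omega>))\<^sup>2)"
    and mean: "\<And>i. i \<in> {1..m} \<Longrightarrow> prob_space.expectation M (\<lambda>\<omega>. log B (P i 1 \<omega>)) = \<mu>"
    and var: "\<And>i. i \<in> {1..m} \<Longrightarrow> prob_space.variance M (\<lambda>\<omega>. log B (P i 1 \<omega>)) = \<sigma>\<^sup>2"
    and "\<sigma> > 0"
    and IJ: "I \<subseteq> {1..m}" "J \<subseteq> {1..m}" "I \<noteq> J" "card I = card J"
  shows "(\<lambda>n. measure M {\<omega>\<in>space M. \<bar>c + (\<Sum>t<n. \<Sum>i\<in>(I - J) \<union> (J - I).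
      (if i \<in> I then 1 else -1) * log B (P i (Suc t) \<omega>))\<bar> \<le> K}) \<longlonglongrightarrow> 0"
proof -
  interpret prob_space M by fact
  have B: "B > 1" by fact
  define Kd where "Kd = (I - J) \<union> (J - I)"
  define s where "s i = (if i \<in> I then 1 else -1 :: real)" for i
  define X where "X t \<omega> = (\<Sum>i\<in>Kd. s i * log B (P i (Suc t) \<omega>))" for t \<omega>
  have Kd_sub: "Kd \<subseteq> {1..m}" using IJ by (auto simp: Kd_def)
  have finKd: "finite Kd" using Kd_sub by (rule finite_subset) simp
  have neKd: "Kd \<noteq> {}" using IJ by (auto simp: Kd_def)
  have Pmeas: "P i n \<in> borel_measurable M" if "i \<in> {1..m}" "n \<ge> 1" for i n
    using distributed_measurable[OF distr[OF that]] by (simp add: measurable_lborel1)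
  define Q where "Q = (\<lambda>(i, n). P i n)"
  have indepQ: "indep_vars (\<lambda>_. borel) Q ({1..m} \<times> {1..})"
    using indep unfolding Q_def .
  have indX: "indep_vars (\<lambda>_. borel) X UNIV"
  proof -
    define Kt where "Kt t = (\<lambda>i. (i, Suc t)) ` Kd" for t
    have "indep_vars (\<lambda>t. PiM (Kt t) (\<lambda>_. borel)) (\<lambda>t \<omega>. restrict (\<lambda>p. Q p \<omega>) (Kt t)) UNIV"
      by (rule indep_vars_restrict[OF indepQ]) (use Kd_sub in \<open>auto simp: Kt_def disjoint_family_on_def\<close>)
    then have "indep_vars (\<lambda>_. borel) (\<lambda>t \<omega>. (\<lambda>x. \<Sum>i\<in>Kd. s i * log B (x (i, Suc t))) (restrict (\<lambda>p. Q p \<omega>) (Kt t))) UNIV"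
    proof (rule indep_vars_compose2)
      fix t :: nat
      have [measurable]: "(\<lambda>x. x (i, Suc t)) \<in> borel_measurable (PiM (Kt t) (\<lambda>_. borel))" if "i \<in> Kd" for i
        using that by (intro measurable_component_singleton) (auto simp: Kt_def)
      show "(\<lambda>x. \<Sum>i\<in>Kd. s i * log B (x (i, Suc t))) \<in> borel_measurable (PiM (Kt t) (\<lambda>_. borel))"
        by (intro borel_measurable_sum borel_measurable_times borel_measurable_const borel_measurable_log) auto
    qed
    moreover have "(\<lambda>x. \<Sum>i\<in>Kd. s i * log B (x (i, Suc t))) (restrict (\<lambda>p. Q p \<omega>) (Kt t)) = X t \<omega>" for t \<omega>
      unfolding X_def Kt_def Q_def by (intro sum.cong) auto
    ultimately show ?thesis by simp
  qed
  define D where "D = PiM Kd (\<lambda>i. distr M borel (P i 1))"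
  have marg: "distr M borel (P i n) = distr M borel (P i 1)" if "i \<in> {1..m}" "n \<ge> 1" for i n
  proof -
    have "distr M borel (P i n) = distr M lborel (P i n)" by (rule distr_cong) auto
    also have "\<dots> = density lborel (\<lambda>x. ennreal (indicator {0<..<1} x * f i x))"
      by (rule distributed_distr_eq_density[OF distr[OF that]])
    also have "\<dots> = distr M lborel (P i 1)"
      by (rule distributed_distr_eq_density[OF distr[OF that(1)], symmetric]) simp
    also have "\<dots> = distr M borel (P i 1)" by (rule distr_cong) auto
    finally show ?thesis .
  qed
  have joint: "distr M (PiM Kd (\<lambda>_. borel)) (\<lambda>\<omega>. \<lambda>i\<in>Kd. P i (Suc t) \<omega>) = D" for t
  proof -
    define P' where "P' i \<omega> = (if i \<in> {1..m} then P i (Suc t) \<omega> else 0)" for i \<omega>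
    have rv: "random_variable borel (P' i)" for i
      unfolding P'_def by (cases "i \<in> {1..m}") (auto intro: Pmeas)
    have "indep_vars (\<lambda>i. PiM {(i, Suc t)} (\<lambda>_. borel)) (\<lambda>i \<omega>. restrict (\<lambda>p. Q p \<omega>) {(i, Suc t)}) Kd"
      by (rule indep_vars_restrict[OF indepQ]) (use Kd_sub in \<open>auto simp: disjoint_family_on_def\<close>)
    then have "indep_vars (\<lambda>_. borel) (\<lambda>i \<omega>. (\<lambda>x. x (i, Suc t)) (restrict (\<lambda>p. Q p \<omega>) {(i, Suc t)})) Kd"
      by (rule indep_vars_compose2) (intro measurable_component_singleton, simp)
    moreover have "indep_vars (\<lambda>_. borel) P' Kd \<longleftrightarrow>
        indep_vars (\<lambda>_. borel) (\<lambda>i \<omega>. (\<lambda>x. x (i, Suc t)) (restrict (\<lambda>p. Q p \<omega>) {(i, Suc t)})) Kd"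
      using Kd_sub by (intro indep_vars_cong) (auto simp: P'_def Q_def fun_eq_iff)
    ultimately have indP': "indep_vars (\<lambda>_. borel) P' Kd" by blast
    have "distr M (PiM Kd (\<lambda>_. borel)) (\<lambda>x. \<lambda>i\<in>Kd. P' i x) = PiM Kd (\<lambda>i. distr M borel (P' i))"
      using indep_vars_iff_distr_eq_PiM[where X=P' and M'="\<lambda>_. borel", OF neKd rv] indP' by blast
    moreover have "distr M (PiM Kd (\<lambda>_. borel)) (\<lambda>x. \<lambda>i\<in>Kd. P' i x) =
        distr M (PiM Kd (\<lambda>_. borel)) (\<lambda>\<omega>. \<lambda>i\<in>Kd. P i (Suc t) \<omega>)"
      using Kd_sub by (intro distr_cong) (auto simp: P'_def fun_eq_iff)
    moreover have "PiM Kd (\<lambda>i. distr M borel (P' i)) = D"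
      unfolding D_def
    proof (rule PiM_cong)
      fix i assume i: "i \<in> Kd"
      then have i': "i \<in> {1..m}" using Kd_sub by auto
      have "distr M borel (P' i) = distr M borel (P i (Suc t))"
        using i' by (intro distr_cong) (auto simp: P'_def)
      also have "\<dots> = distr M borel (P i 1)" by (rule marg[OF i']) simp
      finally show "distr M borel (P' i) = distr M borel (P i 1)" .
    qed simp
    ultimately show ?thesis by simp
  qed
  define g where "g x = (\<Sum>i\<in>Kd. s i * log B (x i))" for x :: "nat \<Rightarrow> real"
  have gmeas: "g \<in> borel_measurable (PiM Kd (\<lambda>_. borel))"
  proof -
    have [measurable]: "(\<lambda>x. x i) \<in> borel_measurable (PiM Kd (\<lambda>_. borel))" if "i \<in> Kd" for i
      using that by (intro measurable_component_singleton) auto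
    show ?thesis unfolding g_def
      by (intro borel_measurable_sum borel_measurable_times borel_measurable_const borel_measurable_log) auto
  qed
  have distX: "distr M borel (X t) = distr D borel g" for t
  proof -
    have jm: "(\<lambda>\<omega>. \<lambda>i\<in>Kd. P i (Suc t) \<omega>) \<in> measurable M (PiM Kd (\<lambda>_. borel))"
      using Kd_sub by (intro measurable_restrict Pmeas) auto
    have "distr D borel g = distr M borel (g \<circ> (\<lambda>\<omega>. \<lambda>i\<in>Kd. P i (Suc t) \<omega>))"
      unfolding joint[of t, symmetric] by (rule distr_distr[OF gmeas jm])
    also have "\<dots> = distr M borel (X t)"
      by (rule distr_cong) (auto simp: g_def X_def intro!: sum.cong)
    finally show ?thesis by simp
  qed
  have distr0: "distr M borel (X n) = distr M borel (X 0)" for n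
    by (simp only: distX)
  define L where "L i \<omega> = log B (P i 1 \<omega>)" for i \<omega>
  define Yv where "Yv i \<omega> = s i * (L i \<omega> - \<mu>)" for i \<omega>
  have s2: "s i * s i = 1" for i by (simp add: s_def)
  have Lmeas: "L i \<in> borel_measurable M" if "i \<in> Kd" for i
  proof -
    have "P i 1 \<in> borel_measurable M" using that Kd_sub by (intro Pmeas) auto
    then show ?thesis unfolding L_def by (intro borel_measurable_log borel_measurable_const) 
  qed
  have Lint: "integrable M (L i)" if "i \<in> Kd" for i
    using int1[of i] that Kd_sub unfolding L_def by auto
  have L2int: "integrable M (\<lambda>\<omega>. (L i \<omega>)\<^sup>2)" if "i \<in> Kd" for i
    using int2[of i] that Kd_sub unfolding L_def by auto
  have LE: "expectation (L i) = \<mu>" if "i \<in> Kd" for i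
    using mean[of i] that Kd_sub unfolding L_def by auto
  have LV: "expectation (\<lambda>\<omega>. (L i \<omega> - \<mu>)\<^sup>2) = \<sigma>\<^sup>2" if "i \<in> Kd" for i
    using var[of i] that Kd_sub LE[OF that] unfolding L_def by auto
  have Yint: "integrable M (Yv i)" if "i \<in> Kd" for i
    unfolding Yv_def using Lint[OF that] by auto
  have YE: "expectation (Yv i) = 0" if "i \<in> Kd" for i
    unfolding Yv_def using Lint[OF that] LE[OF that] by (simp add: prob_space)
  have YY: "integrable M (\<lambda>\<omega>. Yv i \<omega> * Yv j \<omega>) \<and>
      expectation (\<lambda>\<omega>. Yv i \<omega> * Yv j \<omega>) = (if i = j then \<sigma>\<^sup>2 else 0)"
    if ij: "i \<in> Kd" "j \<in> Kd" for i j
  proof (cases "i = j")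
    case True
    have eq: "(\<lambda>\<omega>. Yv i \<omega> * Yv i \<omega>) = (\<lambda>\<omega>. (L i \<omega> - \<mu>)\<^sup>2)"
    proof
      fix \<omega> show "Yv i \<omega> * Yv i \<omega> = (L i \<omega> - \<mu>)\<^sup>2"
        unfolding Yv_def power2_eq_square using s2[of i]
        by (metis (no_types, opaque_lifting) mult.assoc mult.commute mult.left_neutral)
    qed
    have eq2: "(\<lambda>\<omega>. (L i \<omega> - \<mu>)\<^sup>2) = (\<lambda>\<omega>. (L i \<omega>)\<^sup>2 + (- 2 * \<mu>) * L i \<omega> + \<mu>\<^sup>2)"
      by (simp add: fun_eq_iff power2_diff)
    have "integrable M (\<lambda>\<omega>. (L i \<omega> - \<mu>)\<^sup>2)"
      unfolding eq2 using L2int[OF ij(1)] Lint[OF ij(1)] by auto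
    then show ?thesis using True eq LV[OF ij(1)] by simp
  next
    case False
    have ind: "indep_var (PiM {(i, 1)} (\<lambda>_. borel)) (\<lambda>\<omega>. restrict (\<lambda>p. Q p \<omega>) {(i, 1)})
        (PiM {(j, 1)} (\<lambda>_. borel)) (\<lambda>\<omega>. restrict (\<lambda>p. Q p \<omega>) {(j, 1)})"
      using False ij Kd_sub by (intro indep_var_restrict[OF indepQ]) auto
    have m: "(\<lambda>x. s k * (log B (x (k, 1::nat)) - \<mu>)) \<in> borel_measurable (PiM {(k, 1)} (\<lambda>_. borel))" for k
      by (intro borel_measurable_times borel_measurable_const borel_measurable_diff borel_measurable_log
          measurable_component_singleton) auto
    have "indep_var borel ((\<lambda>x. s i * (log B (x (i, 1::nat)) - \<mu>)) \<circ> (\<lambda>\<omega>. restrict (\<lambda>p. Q p \<omega>) {(i, 1)}))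
        borel ((\<lambda>x. s j * (log B (x (j, 1::nat)) - \<mu>)) \<circ> (\<lambda>\<omega>. restrict (\<lambda>p. Q p \<omega>) {(j, 1)}))"
      by (rule indep_var_compose[OF ind m m])
    moreover have "(\<lambda>x. s k * (log B (x (k, 1::nat)) - \<mu>)) \<circ> (\<lambda>\<omega>. restrict (\<lambda>p. Q p \<omega>) {(k, 1)}) = Yv k" for k
      by (simp add: fun_eq_iff Yv_def L_def Q_def)
    ultimately have indY: "indep_var borel (Yv i) borel (Yv j)" by simp
    show ?thesis
      using indep_var_lebesgue_integral[OF indY Yint[OF ij(1)] Yint[OF ij(2)]]
        indep_var_integrable[OF indY Yint[OF ij(1)] Yint[OF ij(2)]] YE[OF ij(1)] False by simp
  qed
  have ssum: "(\<Sum>i\<in>Kd. s i) = 0"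
  proof -
    have fIJ: "finite I" "finite J" using IJ by (auto intro: finite_subset)
    have "(\<Sum>i\<in>Kd. s i) = (\<Sum>i\<in>I - J. s i) + (\<Sum>i\<in>J - I. s i)"
      unfolding Kd_def using fIJ by (intro sum.union_disjoint) auto
    also have "\<dots> = real (card (I - J)) - real (card (J - I))"
      by (simp add: s_def)
    also have "card (I - J) = card (J - I)"
      using fIJ IJ(4) by (simp add: card_Diff_subset_Int Int_commute)
    finally show ?thesis by simp
  qed
  have X0: "X 0 \<omega> = (\<Sum>i\<in>Kd. Yv i \<omega>)" for \<omega>
  proof -
    have "(\<Sum>i\<in>Kd. Yv i \<omega>) = (\<Sum>i\<in>Kd. s i * L i \<omega>) - \<mu> * (\<Sum>i\<in>Kd. s i)"
      by (simp add: Yv_def right_diff_distrib sum_subtractf sum_distrib_left mult.commute)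
    then show ?thesis using ssum by (simp add: X_def L_def)
  qed
  have X0fun: "X 0 = (\<lambda>\<omega>. \<Sum>i\<in>Kd. Yv i \<omega>)" using X0 by auto
  have X0sq: "(X 0 \<omega>)\<^sup>2 = (\<Sum>i\<in>Kd. \<Sum>j\<in>Kd. Yv i \<omega> * Yv j \<omega>)" for \<omega>
    unfolding X0 power2_eq_square sum_product ..
  have sq: "integrable M (\<lambda>x. (X 0 x)\<^sup>2)"
    unfolding X0sq
    by (rule Bochner_Integration.integrable_sum, rule Bochner_Integration.integrable_sum) (use YY in blast)
  have mean0: "expectation (X 0) = 0"
    unfolding X0fun using Yint YE by (subst Bochner_Integration.integral_sum) auto
  have inner: "integrable M (\<lambda>x. \<Sum>j\<in>Kd. Yv i x * Yv j x)" if "i \<in> Kd" for i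
    by (rule Bochner_Integration.integrable_sum) (use YY that in blast)
  have "expectation (\<lambda>x. (X 0 x)\<^sup>2) = (\<Sum>i\<in>Kd. expectation (\<lambda>x. \<Sum>j\<in>Kd. Yv i x * Yv j x))"
    unfolding X0sq by (rule Bochner_Integration.integral_sum) (rule inner)
  also have "\<dots> = (\<Sum>i\<in>Kd. \<Sum>j\<in>Kd. expectation (\<lambda>x. Yv i x * Yv j x))"
  proof (rule sum.cong[OF refl])
    fix i assume i: "i \<in> Kd"
    show "expectation (\<lambda>x. \<Sum>j\<in>Kd. Yv i x * Yv j x) = (\<Sum>j\<in>Kd. expectation (\<lambda>x. Yv i x * Yv j x))"
      by (rule Bochner_Integration.integral_sum) (use YY i in blast)
  qed
  also have "\<dots> = (\<Sum>i\<in>Kd. \<Sum>j\<in>Kd. (if i = j then \<sigma>\<^sup>2 else 0))"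
    using YY by (intro sum.cong refl) blast
  also have "\<dots> = real (card Kd) * \<sigma>\<^sup>2" using finKd by simp
  finally have "variance (X 0) = real (card Kd) * \<sigma>\<^sup>2" using mean0 by simp
  moreover have "card Kd > 0" using finKd neKd by (simp add: card_gt_0_iff)
  ultimately have varpos: "variance (X 0) > 0" using \<open>\<sigma> > 0\<close> by simp
  show ?thesis
    using anticonc[OF indX distr0 sq mean0 varpos, of c K] unfolding X_def Kd_def s_def .
qed


theorem theorem1p6:
  fixes M :: "'a measure" and B :: real and m d :: nat
    and a b :: "nat \<Rightarrow> real"
    and P :: "nat \<Rightarrow> nat \<Rightarrow> 'a \<Rightarrow> real"
    and f :: "nat \<Rightarrow> real \<Rightarrow> real"
    and \<mu> \<sigma> :: real
  assumes "prob_space M"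
    and "B > 1" and "1 \<le> d" and "d \<le> m"
    and box: "\<And>i. i \<in> {1..m} \<Longrightarrow> a i < b i"
    and dens_pos: "\<And>i x. i \<in> {1..m} \<Longrightarrow> x \<in> {0<..<1} \<Longrightarrow> f i x > 0"
    and range: "\<And>i n \<omega>. i \<in> {1..m} \<Longrightarrow> n \<ge> 1 \<Longrightarrow> \<omega> \<in> space M \<Longrightarrow> P i n \<omega> \<in> {0<..<1}"
    and distr: "\<And>i n. i \<in> {1..m} \<Longrightarrow> n \<ge> 1 \<Longrightarrow>
        distributed M lborel (P i n) (\<lambda>x. ennreal (indicator {0<..<1} x * f i x))"
    and indep: "prob_space.indep_vars M (\<lambda>_. borel) (\<lambda>(i, n). P i n) ({1..m} \<times> {1..})"
    and int1: "\<And>i. i \<in> {1..m} \<Longrightarrow> integrable M (\<lambda>\<omega>. log B (P i 1 \<omega>))"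
    and int2: "\<And>i. i \<in> {1..m} \<Longrightarrow> integrable M (\<lambda>\<omega>. (log B (P i 1 \<omega>))\<^sup>2)"
    and int3: "\<And>i. i \<in> {1..m} \<Longrightarrow> integrable M (\<lambda>\<omega>. \<bar>log B (P i 1 \<omega>)\<bar> ^ 3)"
    and mean: "\<And>i. i \<in> {1..m} \<Longrightarrow> prob_space.expectation M (\<lambda>\<omega>. log B (P i 1 \<omega>)) = \<mu>"
    and var: "\<And>i. i \<in> {1..m} \<Longrightarrow> prob_space.variance M (\<lambda>\<omega>. log B (P i 1 \<omega>)) = \<sigma>\<^sup>2"
    and "\<sigma> > 0"
    and benf_max: "strong_benford M B (\<lambda>n \<omega>. max_d m d (side a b P n \<omega>))"
  shows "strong_benford M B (\<lambda>n \<omega>. vol_d m d (side a b P n \<omega>))"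
proof -
  interpret prob_space M by fact
  have B: "B > 1" by fact
  define S where "S = {I. I \<subseteq> {1..m} \<and> card I = d}"
  have finS: "finite S" unfolding S_def
    by (rule finite_subset[of _ "Pow {1..m}"]) auto
  have neS: "S \<noteq> {}"
  proof -
    have "{1..d} \<in> S" using \<open>d \<le> m\<close> unfolding S_def by auto
    then show ?thesis by auto
  qed
  define pr where "pr I n \<omega> = (\<Prod>i\<in>I. side a b P n \<omega> i)" for I n \<omega>
  have Pmeas: "P i n \<in> borel_measurable M" if "i \<in> {1..m}" "n \<ge> 1" for i n
    using distributed_measurable[OF distr[OF that]] by (simp add: measurable_lborel1)
  have side_pos: "side a b P n \<omega> i > 0" if "i \<in> {1..m}" "\<omega> \<in> space M" for i n \<omega>
    unfolding side_def using box[OF that(1)] range[OF that(1) _ that(2)]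
    by (intro mult_pos_pos prod_pos) auto
  have pr_pos: "pr I n \<omega> > 0" if "I \<in> S" "\<omega> \<in> space M" for I n \<omega>
    unfolding pr_def using that side_pos by (intro prod_pos) (auto simp: S_def)
  have side_meas: "(\<lambda>\<omega>. side a b P n \<omega> i) \<in> borel_measurable M" if "i \<in> {1..m}" for i n
    unfolding side_def using that
    by (intro borel_measurable_times borel_measurable_const borel_measurable_prod Pmeas) auto
  have pr_meas[measurable]: "pr I n \<in> borel_measurable M" if "I \<in> S" for I n
  proof -
    have "(\<lambda>\<omega>. pr I n \<omega>) \<in> borel_measurable M"
      unfolding pr_def using that by (intro borel_measurable_prod side_meas) (auto simp: S_def)
    then show ?thesis by simp
  qed
  have maxeq: "max_d m d (side a b P n \<omega>) = Max ((\<lambda>I. pr I n \<omega>) ` S)" for n \<omega>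
    unfolding max_d_def pr_def S_def ..
  have voleq: "vol_d m d (side a b P n \<omega>) = 2 ^ (m - d) * (\<Sum>I\<in>S. pr I n \<omega>)" for n \<omega>
    unfolding vol_d_def pr_def S_def ..
  have max_pos: "Max ((\<lambda>I. pr I n \<omega>) ` S) > 0" if "\<omega> \<in> space M" for n \<omega>
    using finS neS pr_pos[OF _ that] by (subst Max_gr_iff) auto
  have sum_pos: "(\<Sum>I\<in>S. pr I n \<omega>) > 0" if "\<omega> \<in> space M" for n \<omega>
    using finS neS pr_pos[OF _ that] by (intro sum_pos) auto
  define Y where "Y n \<omega> = log B (Max ((\<lambda>I. pr I n \<omega>) ` S))" for n \<omega>
  define E where "E n \<omega> = log B (\<Sum>I\<in>S. pr I n \<omega>) - log B (Max ((\<lambda>I. pr I n \<omega>) ` S))" for n \<omega>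
  define c where "c = log B (2 ^ (m - d))"
  have Ymeas[measurable]: "Y n \<in> borel_measurable M" for n
  proof -
    have "(\<lambda>\<omega>. Max ((\<lambda>I. pr I n \<omega>) ` S)) \<in> borel_measurable M"
      using finS by (intro borel_measurable_Max pr_meas) auto
    then show ?thesis unfolding Y_def by (intro borel_measurable_log borel_measurable_const)
  qed
  have Emeas[measurable]: "E n \<in> borel_measurable M" for n
  proof -
    have "(\<lambda>\<omega>. Max ((\<lambda>I. pr I n \<omega>) ` S)) \<in> borel_measurable M"
      using finS by (intro borel_measurable_Max pr_meas) auto
    moreover have "(\<lambda>\<omega>. \<Sum>I\<in>S. pr I n \<omega>) \<in> borel_measurable M"
      by (intro borel_measurable_sum pr_meas)
    ultimately show ?thesis unfolding E_def by (intro borel_measurable_diff borel_measurable_log borel_measurable_const)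
  qed
  have Epos: "E n \<omega> \<ge> 0" if "\<omega> \<in> space M" for n \<omega>
  proof -
    have "Max ((\<lambda>I. pr I n \<omega>) ` S) \<in> (\<lambda>I. pr I n \<omega>) ` S" using finS neS by (intro Max_in) auto
    then obtain J where "J \<in> S" "pr J n \<omega> = Max ((\<lambda>I. pr I n \<omega>) ` S)" by (elim imageE) simp
    moreover have "pr J n \<omega> \<le> (\<Sum>I\<in>S. pr I n \<omega>)"
      using calculation(1) finS pr_pos[OF _ that] by (intro member_le_sum) (auto intro: less_imp_le)
    ultimately show ?thesis unfolding E_def using max_pos[OF that] sum_pos[OF that] B
      by (simp del: Max_gr_iff add: log_le_cancel_iff)
  qed
  have logside: "log B (side a b P n \<omega> i) = log B (b i - a i) + (\<Sum>t<n. log B (P i (Suc t) \<omega>))"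
    if "i \<in> {1..m}" "\<omega> \<in> space M" for i n \<omega>
  proof -
    have pos: "P i t \<omega> > 0" if "t \<in> {1..n}" for t using range[OF \<open>i \<in> {1..m}\<close> _ \<open>\<omega> \<in> space M\<close>, of t] that by auto
    have "log B (side a b P n \<omega> i) = log B (b i - a i) + log B (\<Prod>t\<in>{1..n}. P i t \<omega>)"
      unfolding side_def using box[OF that(1)] pos by (intro log_mult_pos prod_pos) auto
    also have "log B (\<Prod>t\<in>{1..n}. P i t \<omega>) = (\<Sum>t\<in>{1..n}. log B (P i t \<omega>))"
      using pos by (intro log_prod_pos) auto
    also have "\<dots> = (\<Sum>t<n. log B (P i (Suc t) \<omega>))" by (rule sum_bounds_lt_plus1[symmetric])
    finally show ?thesis .
  qed
  have logdiff: "log B (pr I n \<omega>) - log B (pr J n \<omega>) =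
      (\<Sum>i\<in>(I - J) \<union> (J - I). (if i \<in> I then 1 else -1) * log B (b i - a i)) +
      (\<Sum>t<n. \<Sum>i\<in>(I - J) \<union> (J - I). (if i \<in> I then 1 else -1) * log B (P i (Suc t) \<omega>))"
    if IJ: "I \<in> S" "J \<in> S" and \<omega>: "\<omega> \<in> space M" for I J n \<omega>
  proof -
    have fin: "finite I" "finite J" using IJ by (auto simp: S_def intro: finite_subset)
    have "log B (pr K n \<omega>) = (\<Sum>i\<in>K. log B (side a b P n \<omega> i))" if "K \<in> S" for K
      unfolding pr_def using that \<omega> side_pos
      by (intro log_prod_pos) (auto simp: S_def intro: finite_subset)
    then have "log B (pr I n \<omega>) - log B (pr J n \<omega>) =
       (\<Sum>i\<in>(I - J) \<union> (J - I). (if i \<in> I then 1 else -1) * log B (side a b P n \<omega> i))"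
      using IJ fin by (simp add: sum_diff_sym)
    also have "\<dots> = (\<Sum>i\<in>(I - J) \<union> (J - I). (if i \<in> I then 1 else -1) *
        (log B (b i - a i) + (\<Sum>t<n. log B (P i (Suc t) \<omega>))))"
      using IJ \<omega> by (intro sum.cong refl arg_cong2[where f="(*)"] logside) (auto simp: S_def)
    also have "\<dots> = (\<Sum>i\<in>(I - J) \<union> (J - I). (if i \<in> I then 1 else -1) * log B (b i - a i)) +
      (\<Sum>i\<in>(I - J) \<union> (J - I). \<Sum>t<n. (if i \<in> I then 1 else -1) * log B (P i (Suc t) \<omega>))"
      by (simp add: distrib_left sum.distrib sum_distrib_left)
    also have "(\<Sum>i\<in>(I - J) \<union> (J - I). \<Sum>t<n. (if i \<in> I then 1 else -1) * log B (P i (Suc t) \<omega>)) =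
      (\<Sum>t<n. \<Sum>i\<in>(I - J) \<union> (J - I). (if i \<in> I then 1 else -1) * log B (P i (Suc t) \<omega>))"
      by (rule sum.swap)
    finally show ?thesis .
  qed
  have pairlim: "(\<lambda>n. prob {\<omega>\<in>space M. \<bar>log B (pr I n \<omega>) - log B (pr J n \<omega>)\<bar> \<le> K}) \<longlonglongrightarrow> 0"
    if IJ: "I \<in> S" "J \<in> S" "I \<noteq> J" for I J K
  proof -
    have "(\<lambda>n. prob {\<omega>\<in>space M. \<bar>(\<Sum>i\<in>(I - J) \<union> (J - I). (if i \<in> I then 1 else -1) * log B (b i - a i)) +
      (\<Sum>t<n. \<Sum>i\<in>(I - J) \<union> (J - I). (if i \<in> I then 1 else -1) * log B (P i (Suc t) \<omega>))\<bar> \<le> K}) \<longlonglongrightarrow> 0"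
      using IJ by (intro pair_conc[where f=f and \<mu>=\<mu> and \<sigma>=\<sigma> and m=m] assms) (auto simp: S_def)
    moreover have "{\<omega>\<in>space M. \<bar>log B (pr I n \<omega>) - log B (pr J n \<omega>)\<bar> \<le> K} =
      {\<omega>\<in>space M. \<bar>(\<Sum>i\<in>(I - J) \<union> (J - I). (if i \<in> I then 1 else -1) * log B (b i - a i)) +
      (\<Sum>t<n. \<Sum>i\<in>(I - J) \<union> (J - I). (if i \<in> I then 1 else -1) * log B (P i (Suc t) \<omega>))\<bar> \<le> K}" for n
      using logdiff[OF IJ(1,2)] by auto
    ultimately show ?thesis by simp
  qed
  have Esmall: "(\<lambda>n. prob {\<omega>\<in>space M. E n \<omega> > \<eta>}) \<longlonglongrightarrow> 0" if "\<eta> > 0" for \<eta>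
  proof -
    define N where "N = card S"
    have N: "N > 0" using finS neS by (simp add: N_def card_gt_0_iff)
    have Bh: "B powr \<eta> > 1" using B \<open>\<eta> > 0\<close> by simp
    define K where "K = - log B ((B powr \<eta> - 1) / N)"
    have BK: "B powr (- K) = (B powr \<eta> - 1) / N" using B Bh N by (simp add: K_def)
    define PS where "PS = {(I, J). I \<in> S \<and> J \<in> S \<and> I \<noteq> J}"
    have finPS: "finite PS" unfolding PS_def
      by (rule finite_subset[of _ "S \<times> S"]) (auto simp: finS)
    define A where "A p n = {\<omega>\<in>space M. \<bar>log B (pr (fst p) n \<omega>) - log B (pr (snd p) n \<omega>)\<bar> \<le> K}" for p n
    have Ameas: "A p n \<in> sets M" if "p \<in> PS" for p n
    proof -
      have [measurable]: "pr (fst p) n \<in> borel_measurable M" "pr (snd p) n \<in> borel_measurable M"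
        using that by (auto simp: PS_def intro!: pr_meas)
      show ?thesis unfolding A_def by measurable
    qed
    have sub: "{\<omega>\<in>space M. E n \<omega> > \<eta>} \<subseteq> (\<Union>p\<in>PS. A p n)" for n
    proof safe
      fix \<omega> assume \<omega>: "\<omega> \<in> space M" "E n \<omega> > \<eta>"
      show "\<omega> \<in> (\<Union>p\<in>PS. A p n)"
      proof (rule ccontr)
        assume "\<omega> \<notin> (\<Union>p\<in>PS. A p n)"
        then have sep: "\<bar>log B (pr I n \<omega>) - log B (pr J n \<omega>)\<bar> > K" if "I \<in> S" "J \<in> S" "I \<noteq> J" for I J
          using that \<omega>(1) unfolding A_def PS_def by force
        have "(\<Sum>I\<in>S. pr I n \<omega>) \<le> Max ((\<lambda>I. pr I n \<omega>) ` S) * (1 + card S * B powr (- K))"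
          by (rule sum_le_max_aux[OF finS neS pr_pos[OF _ \<omega>(1)] B sep])
        also have "1 + card S * B powr (- K) = B powr \<eta>" using N by (simp add: BK N_def)
        finally have le: "(\<Sum>I\<in>S. pr I n \<omega>) \<le> Max ((\<lambda>I. pr I n \<omega>) ` S) * B powr \<eta>" .
        have "log B (\<Sum>I\<in>S. pr I n \<omega>) \<le> log B (Max ((\<lambda>I. pr I n \<omega>) ` S) * B powr \<eta>)"
          using le sum_pos[OF \<omega>(1)] max_pos[OF \<omega>(1)] B by (subst log_le_cancel_iff) auto
        also have "\<dots> = log B (Max ((\<lambda>I. pr I n \<omega>) ` S)) + \<eta>"
          using max_pos[OF \<omega>(1)] B by (simp add: log_mult_pos)
        finally have "E n \<omega> \<le> \<eta>" unfolding E_def by simp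
        then show False using \<omega>(2) by simp
      qed
    qed
    have bound: "prob {\<omega>\<in>space M. E n \<omega> > \<eta>} \<le> (\<Sum>p\<in>PS. prob (A p n))" for n
    proof -
      have "prob {\<omega>\<in>space M. E n \<omega> > \<eta>} \<le> prob (\<Union>p\<in>PS. A p n)"
        using Ameas by (intro finite_measure_mono[OF sub]) (auto intro!: sets.finite_UN finPS)
      also have "\<dots> \<le> (\<Sum>p\<in>PS. prob (A p n))"
        using Ameas finPS by (intro measure_UNION_le) auto
      finally show ?thesis .
    qed
    have lim: "(\<lambda>n. \<Sum>p\<in>PS. prob (A p n)) \<longlonglongrightarrow> 0"
    proof (rule tendsto_null_sum)
      fix p assume "p \<in> PS"
      then show "(\<lambda>n. prob (A p n)) \<longlonglongrightarrow> 0"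
        unfolding A_def PS_def by (auto intro!: pairlim)
    qed
    show ?thesis
      by (rule tendsto_sandwich[OF _ _ tendsto_const lim]) (intro always_eventually allI bound measure_nonneg)+
  qed
  have fbY: "fb M Y"
  proof -
    have "strong_benford M B (\<lambda>n \<omega>. Max ((\<lambda>I. pr I n \<omega>) ` S))"
      using benf_max unfolding maxeq .
    moreover have "strong_benford M B (\<lambda>n \<omega>. Max ((\<lambda>I. pr I n \<omega>) ` S)) \<longleftrightarrow>
        fb M (\<lambda>n \<omega>. log B (Max ((\<lambda>I. pr I n \<omega>) ` S)))"
      by (rule sb_iff_fb[OF B max_pos])
    ultimately show ?thesis unfolding Y_def by blast
  qed
  have fbYc: "fb M (\<lambda>n \<omega>. Y n \<omega> + c)"
    by (rule fb_shift[OF fbY Ymeas])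
  have "fb M (\<lambda>n \<omega>. (Y n \<omega> + c) + E n \<omega>)"
    by (rule fb_perturb[OF fbYc _ Emeas Epos Esmall]) measurable
  then have "fb M (\<lambda>n \<omega>. log B (vol_d m d (side a b P n \<omega>)))"
  proof (rule fb_cong)
    fix n \<omega> assume "\<omega> \<in> space M"
    then show "log B (vol_d m d (side a b P n \<omega>)) = Y n \<omega> + c + E n \<omega>"
      unfolding voleq Y_def E_def c_def using sum_pos B by (simp add: log_mult_pos)
  qed
  moreover have "vol_d m d (side a b P n \<omega>) > 0" if "\<omega> \<in> space M" for n \<omega>
    unfolding voleq using sum_pos[OF that] by simp
  ultimately show ?thesis
    using sb_iff_fb[OF B, of "\<lambda>n \<omega>. vol_d m d (side a b P n \<omega>)"] by blast
qed

end
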